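(* For $n\ge1$ let $C_n$ be the $n\times n$ lower triangular matrix all of whose entries on and below the diagonal equal $1$, and define $$G(n)=\det\begin{pmatrix}(t-1)I_n & C_n^T\\ tC_n & (t-1)I_n\end{pmatrix}\in\mathbb Z[t],\qquad G(0)=1.$$ (For $n\ge1$, $G(n)$ is the normalized Alexander polynomial of the alternating quasi-rational knot $X_n(2,\dots,2\mid-2,\dots,-2)$.) Then for every $n\ge1$: all zeros of $G(n)$ are real; $G(n)G(n-1)$ has no repeated zeros; the zeros of $G(n)$ and of $(t-1)G(n-1)$ are interlaced; and the largest zero of $G(n)$ is at least $n+1$.
   Context: Interlacing: two real-rooted polynomials with zeros $\alpha_1\le\dots\le\alpha_n$ and $\beta_1\le\dots\le\beta_m$ (with multiplicity) are interlaced if $|m-n|\le1$ and the zeros alternate: if $n=m$, either $\alpha_1\le\beta_1\le\alpha_2\le\dots\le\alpha_n\le\beta_n$ or $\beta_1\le\alpha_1\le\dots\le\beta_n\le\alpha_n$; if $n=m+1$, $\alpha_1\le\beta_1\le\alpha_2\le\dots\le\beta_m\le\alpha_{m+1}$; if $m=n+1$, $\beta_1\le\alpha_1\le\beta_2\le\dots\le\alpha_n\le\beta_{n+1}$. *)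

theory Defs
  imports "Jordan_Normal_Form.Determinant" "HOL-Computational_Algebra.Polynomial" Complex_Main
begin

definition C_mat :: "nat \<Rightarrow> int poly mat" where
  "C_mat n = mat n n (\<lambda>(i,j). if j \<le> i then 1 else 0)"

definition G_mat :: "nat \<Rightarrow> int poly mat" where
  "G_mat n = mat (2*n) (2*n) (\<lambda>(i,j).
     if i < n \<and> j < n then (if i = j then [:-1, 1:] else 0)
     else if i < n \<and> n \<le> j then (C_mat n) $$ (j - n, i)
     else if n \<le> i \<and> j < n then [:0, 1:] * (C_mat n) $$ (i - n, j)
     else (if i = j then [:-1, 1:] else 0))"

definition G :: "nat \<Rightarrow> int poly" where
  "G n = (if n = 0 then 1 else det (G_mat n))"

definition interlace_lists :: "real list \<Rightarrow> real list \<Rightarrow> bool" where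
  "interlace_lists as bs \<longleftrightarrow>
     (length as = length bs \<and> (\<forall>i<length as. as ! i \<le> bs ! i)
        \<and> (\<forall>i. Suc i < length as \<longrightarrow> bs ! i \<le> as ! Suc i))
   \<or> (length as = Suc (length bs) \<and>
        (\<forall>i<length bs. as ! i \<le> bs ! i \<and> bs ! i \<le> as ! Suc i))"

definition interlaced :: "real poly \<Rightarrow> real poly \<Rightarrow> bool" where
  "interlaced p q \<longleftrightarrow> p \<noteq> 0 \<and> q \<noteq> 0 \<and>
     (\<exists>as bs. sorted as \<and> sorted bs
        \<and> p = smult (lead_coeff p) (\<Prod>a\<leftarrow>as. [:-a, 1:])
        \<and> q = smult (lead_coeff q) (\<Prod>b\<leftarrow>bs. [:-b, 1:])
        \<and> (interlace_lists as bs \<or> interlace_lists bs as))"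

end

theory Submission
  imports Defs "Jordan_Normal_Form.Char_Poly"
begin


definition tri :: "nat \<Rightarrow> 'a::comm_ring_1 \<Rightarrow> 'a \<Rightarrow> 'a \<Rightarrow> 'a mat" where
  "tri n a b c = mat n n (\<lambda>(i,j). if i = j then (if i = n - 1 then a else b)
      else if i = Suc j \<or> j = Suc i then c else 0)"

lemma tri_carrier[simp]: "tri n a b c \<in> carrier_mat n n"
  unfolding tri_def by auto

lemma tri_dims[simp]: "dim_row (tri n a b c) = n" "dim_col (tri n a b c) = n"
  unfolding tri_def by auto

lemma det_tri_0: "det (tri 0 a b c) = 1"
  by (simp add: det_def tri_def)

lemma det_tri_1: "det (tri 1 a b c) = a"
proof -
  have "tri 1 a b c = mat 1 1 (\<lambda>_. a)" by (rule eq_matI) (auto simp: tri_def)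
  thus ?thesis by (simp add: det_lower_triangular[of 1] diag_mat_def)
qed

lemma det_tri_SS: "det (tri (Suc (Suc n)) a b c) = b * det (tri (Suc n) a b c) - c^2 * det (tri n a b c)"
proof -
  let ?A = "tri (Suc (Suc n)) a b c"
  define B where "B = mat_delete ?A 0 1"
  have d00: "mat_delete ?A 0 0 = tri (Suc n) a b c"
    by (rule eq_matI) (auto simp: tri_def mat_delete_def)
  have Bc: "B \<in> carrier_mat (Suc n) (Suc n)" unfolding B_def mat_delete_def by (auto simp: tri_def)
  have dB0: "mat_delete B 0 0 = tri n a b c"
    by (rule eq_matI) (auto simp: tri_def mat_delete_def B_def)
  have "det B = (\<Sum>i<Suc n. B $$ (i,0) * cofactor B i 0)"
    by (rule laplace_expansion_column[OF Bc]) auto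
  also have "\<dots> = B $$ (0,0) * cofactor B 0 0 + (\<Sum>i<n. B $$ (Suc i,0) * cofactor B (Suc i) 0)"
    by (rule sum.lessThan_Suc_shift)
  also have "(\<Sum>i<n. B $$ (Suc i,0) * cofactor B (Suc i) 0) = 0"
    by (rule sum.neutral) (auto simp: B_def mat_delete_def tri_def)
  also have "B $$ (0,0) = c" by (simp add: B_def mat_delete_def tri_def)
  finally have detB: "det B = c * det (tri n a b c)" by (simp add: cofactor_def dB0)
  have "det ?A = (\<Sum>j<Suc (Suc n). ?A $$ (0,j) * cofactor ?A 0 j)"
    by (rule laplace_expansion_row) auto
  also have "\<dots> = ?A $$ (0,0) * cofactor ?A 0 0 + (?A $$ (0,1) * cofactor ?A 0 1
      + (\<Sum>j<n. ?A $$ (0,Suc (Suc j)) * cofactor ?A 0 (Suc (Suc j))))"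
    unfolding sum.lessThan_Suc_shift[of _ "Suc n"] sum.lessThan_Suc_shift[of _ n] by (simp add: add.assoc)
  also have "(\<Sum>j<n. ?A $$ (0,Suc (Suc j)) * cofactor ?A 0 (Suc (Suc j))) = 0"
    by (rule sum.neutral) (auto simp: tri_def)
  also have "?A $$ (0,0) = b" by (simp add: tri_def)
  also have "?A $$ (0,1) = c" by (simp add: tri_def)
  finally show ?thesis using detB unfolding B_def
    by (simp add: cofactor_def d00 power2_eq_square)
qed

definition Fm :: "nat \<Rightarrow> 'a::comm_ring_1 mat" where
  "Fm n = mat n n (\<lambda>(i,j). if i = j then 1 else if i = Suc j then -1 else 0)"

lemma Fm_carrier[simp]: "Fm n \<in> carrier_mat n n" unfolding Fm_def by auto
lemma C_carrier[simp]: "C_mat n \<in> carrier_mat n n" unfolding C_mat_def by auto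

lemma dims[simp]: "dim_row (Fm n) = n" "dim_col (Fm n) = n" "dim_row (C_mat n) = n" "dim_col (C_mat n) = n"
  unfolding Fm_def C_mat_def by auto

lemma Fm_alt: "i < n \<Longrightarrow> j < n \<Longrightarrow> Fm n $$ (i,j) = (if i = j then 1 else 0) - (if i = Suc j then 1 else 0)"
  unfolding Fm_def by auto

lemma CF: "C_mat n * Fm n = 1\<^sub>m n"
proof (rule eq_matI)
  fix i j assume i: "i < dim_row (1\<^sub>m n :: int poly mat)" and j: "j < dim_col (1\<^sub>m n :: int poly mat)"
  hence i: "i < n" and j: "j < n" by auto
  have "(C_mat n * Fm n) $$ (i,j) = (\<Sum>k<n. C_mat n $$ (i,k) * Fm n $$ (k,j))"
    using i j by (simp add: scalar_prod_def lessThan_atLeast0) 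
  also have "\<dots> = (\<Sum>k<n. C_mat n $$ (i,k) * ((if k = j then 1 else 0) - (if k = Suc j then 1 else 0)))"
    by (rule sum.cong) (auto simp: Fm_alt j)
  also have "\<dots> = (\<Sum>k<n. (if k = j then C_mat n $$ (i,j) else 0)) - (\<Sum>k<n. (if k = Suc j then C_mat n $$ (i,Suc j) else 0))"
    by (subst sum_subtractf[symmetric], rule sum.cong) auto
  also have "\<dots> = 1\<^sub>m n $$ (i,j)"
    using i j by (auto simp: C_mat_def)
  finally show "(C_mat n * Fm n) $$ (i,j) = 1\<^sub>m n $$ (i,j)" .
qed auto

lemma FtF: "transpose_mat (Fm n) * Fm n = (tri n 1 2 (-1) :: int poly mat)"
proof (rule eq_matI)
  fix i j assume i: "i < dim_row (tri n 1 2 (-1) :: int poly mat)" and j: "j < dim_col (tri n 1 2 (-1) :: int poly mat)"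
  hence i: "i < n" and j: "j < n" by (auto simp: tri_def)
  have "(transpose_mat (Fm n) * Fm n) $$ (i,j) = (\<Sum>k<n. Fm n $$ (k,i) * Fm n $$ (k,j))"
    using i j by (simp add: scalar_prod_def lessThan_atLeast0) 
  also have "\<dots> = (\<Sum>k<n. ((if k = i then 1 else 0) - (if k = Suc i then 1 else 0)) * ((if k = j then 1 else 0) - (if k = Suc j then 1 else 0)))"
    by (rule sum.cong) (auto simp: Fm_alt i j)
  also have "\<dots> = (\<Sum>k<n. (if k = i then (if i = j then 1 else 0) - (if i = Suc j then 1 else 0) else 0))
      + (\<Sum>k<n. (if k = Suc i then (if Suc i = Suc j then 1 else 0) - (if Suc i = j then 1 else 0) else 0))"
    by (subst sum.distrib[symmetric], rule sum.cong) auto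
  also have "\<dots> = tri n 1 2 (-1) $$ (i,j)"
    using i j by (auto simp: tri_def)
  finally show "(transpose_mat (Fm n) * Fm n) $$ (i,j) = tri n 1 2 (-1) $$ (i,j)" .
qed auto

lemma det_Fm: "det (Fm n) = 1"
proof -
  have "det (Fm n) = prod_list (diag_mat (Fm n))"
    by (rule det_lower_triangular[of n]) (auto simp: Fm_def)
  also have "diag_mat (Fm n) = replicate n 1"
    by (rule nth_equalityI) (auto simp: diag_mat_def Fm_def)
  finally show ?thesis by simp
qed

lemma aux_poly: "(pCons 0 1 - 1 :: int poly) = [:-1,1:]"
  by (simp add: one_pCons)

lemma two_poly: "[:2:] = (2::int poly)"
  by (metis of_int_numeral of_int_poly)

lemma G_mat_block: "G_mat n = four_block_mat ([:-1,1:] \<cdot>\<^sub>m 1\<^sub>m n) (transpose_mat (C_mat n))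
   ([:0,1:] \<cdot>\<^sub>m C_mat n) ([:-1,1:] \<cdot>\<^sub>m 1\<^sub>m n)"
  by (rule eq_matI) (auto simp: G_mat_def aux_poly)

lemma tri_lin: "u \<cdot>\<^sub>m tri n 1 2 (-1) - t \<cdot>\<^sub>m 1\<^sub>m n = tri n (u - t) (2*u - t) (-u)"
  by (rule eq_matI) (auto simp: tri_def)

lemma det_G_mat: "det (G_mat n) = det (tri n ([:-1,1:]*[:-1,1:] - [:0,1:]) (2*([:-1,1:]*[:-1,1:]) - [:0,1:]) (-([:-1,1:]*[:-1,1:])))"
proof -
  let ?a = "[:-1,1:] :: int poly" and ?t = "[:0,1:] :: int poly"
  let ?C = "C_mat n" and ?F = "Fm n :: int poly mat"
  let ?X = "(?a * ?a) \<cdot>\<^sub>m 1\<^sub>m n - ?t \<cdot>\<^sub>m (transpose_mat ?C * ?C)"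
  have e1: "det (G_mat n) = det (([:-1,1:] \<cdot>\<^sub>m 1\<^sub>m n) * ([:-1,1:] \<cdot>\<^sub>m 1\<^sub>m n)
     - transpose_mat (C_mat n) * ([:0,1:] \<cdot>\<^sub>m C_mat n))"
    unfolding G_mat_block
    by (rule det_four_block_mat[of _ n]) (auto simp: mult_smult_distrib mult_smult_assoc_mat)
  have e2: "([:-1,1:] \<cdot>\<^sub>m 1\<^sub>m n) * ([:-1,1:] \<cdot>\<^sub>m 1\<^sub>m n) - transpose_mat ?C * ([:0,1:] \<cdot>\<^sub>m ?C)
     = ?X"
  proof -
    have "([:-1,1:] \<cdot>\<^sub>m 1\<^sub>m n) * ([:-1,1:] \<cdot>\<^sub>m 1\<^sub>m n) = ?a \<cdot>\<^sub>m (1\<^sub>m n * (?a \<cdot>\<^sub>m 1\<^sub>m n))"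
      by (rule mult_smult_assoc_mat[of _ n n _ n]) auto
    also have "\<dots> = (?a * ?a) \<cdot>\<^sub>m 1\<^sub>m n" by (rule eq_matI) (auto simp: two_poly)
    finally have 1: "([:-1,1:] \<cdot>\<^sub>m 1\<^sub>m n) * ([:-1,1:] \<cdot>\<^sub>m 1\<^sub>m n) = (?a * ?a) \<cdot>\<^sub>m 1\<^sub>m n" .
    have 2: "transpose_mat ?C * ([:0,1:] \<cdot>\<^sub>m ?C) = ?t \<cdot>\<^sub>m (transpose_mat ?C * ?C)"
      by (rule mult_smult_distrib[of _ n n _ n]) auto
    show ?thesis by (simp add: 1 2)
  qed
  have Xc: "?X \<in> carrier_mat n n" by auto
  have e3: "det ?X = det (transpose_mat ?F * ?X * ?F)"
  proof -
    have "det (transpose_mat ?F * ?X * ?F) = det (transpose_mat ?F * ?X) * det ?F"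
      by (rule det_mult[of _ n]) (use Xc in auto)
    also have "det (transpose_mat ?F * ?X) = det (transpose_mat ?F) * det ?X"
      by (rule det_mult[of _ n]) (use Xc in auto)
    finally show ?thesis by (simp add: det_transpose[of _ n] det_Fm)
  qed
  have "transpose_mat ?F * ?X = (?a * ?a) \<cdot>\<^sub>m (transpose_mat ?F * 1\<^sub>m n) - ?t \<cdot>\<^sub>m (transpose_mat ?F * (transpose_mat ?C * ?C))"
    by (subst mult_minus_distrib_mat[of _ n n]) (auto simp: mult_smult_distrib[of _ n n _ n])
  hence "transpose_mat ?F * ?X * ?F = ((?a * ?a) \<cdot>\<^sub>m (transpose_mat ?F * 1\<^sub>m n) - ?t \<cdot>\<^sub>m (transpose_mat ?F * (transpose_mat ?C * ?C))) * ?F"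
    by simp
  also have "\<dots> = (?a * ?a) \<cdot>\<^sub>m (transpose_mat ?F * ?F) - ?t \<cdot>\<^sub>m (transpose_mat ?F * (transpose_mat ?C * ?C) * ?F)"
    by (subst minus_mult_distrib_mat[of _ n n]) (auto simp: mult_smult_assoc_mat[of _ n n _ n])
  also have "transpose_mat ?F * (transpose_mat ?C * ?C) * ?F = transpose_mat (?C * ?F) * (?C * ?F)"
  proof -
    have c1: "transpose_mat ?F \<in> carrier_mat n n" "transpose_mat ?C \<in> carrier_mat n n" by auto
    have "transpose_mat (?C * ?F) * (?C * ?F) = (transpose_mat ?F * transpose_mat ?C) * (?C * ?F)"
      by (simp add: transpose_mult[OF C_carrier Fm_carrier])
    also have "\<dots> = transpose_mat ?F * (transpose_mat ?C * (?C * ?F))"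
      by (rule assoc_mult_mat[OF c1(1) c1(2)]) auto
    also have "transpose_mat ?C * (?C * ?F) = (transpose_mat ?C * ?C) * ?F"
      by (rule assoc_mult_mat[OF c1(2), symmetric]) auto
    also have "transpose_mat ?F * ((transpose_mat ?C * ?C) * ?F) = transpose_mat ?F * (transpose_mat ?C * ?C) * ?F"
      by (rule assoc_mult_mat[OF c1(1), symmetric]) auto
    finally show ?thesis by simp
  qed
  also have "\<dots> = 1\<^sub>m n" by (simp add: CF)
  also have "(?a * ?a) \<cdot>\<^sub>m (transpose_mat ?F * ?F) - ?t \<cdot>\<^sub>m 1\<^sub>m n = tri n ([:-1,1:]*[:-1,1:] - [:0,1:]) (2*([:-1,1:]*[:-1,1:]) - [:0,1:]) (-([:-1,1:]*[:-1,1:]))"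
    unfolding FtF by (rule tri_lin)
  finally have e4: "transpose_mat ?F * ?X * ?F = tri n ([:-1,1:]*[:-1,1:] - [:0,1:]) (2*([:-1,1:]*[:-1,1:]) - [:0,1:]) (-([:-1,1:]*[:-1,1:]))" .
  show ?thesis using e1 e2 e3 e4 by simp
qed

fun D :: "nat \<Rightarrow> int poly" where
  "D 0 = 1"
| "D (Suc 0) = [:-1,1:]*[:-1,1:] - [:0,1:]"
| "D (Suc (Suc n)) = (([:-1,1:]*[:-1,1:]) + ([:-1,1:]*[:-1,1:]) - [:0,1:]) * D (Suc n) - ([:-1,1:]*[:-1,1:])^2 * D n"

lemma det_tri_D: "det (tri n ([:-1,1:]*[:-1,1:] - [:0,1:]) (2*([:-1,1:]*[:-1,1:]) - [:0,1:]) (-([:-1,1:]*[:-1,1:]))) = D n"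
proof (induction n rule: D.induct)
  case 1 then show ?case by (simp add: det_tri_0)
next
  case 2 then show ?case using det_tri_1 by simp
next
  case (3 n) then show ?case by (simp only: det_tri_SS D.simps power2_minus mult_2)
qed

lemma G_eq_D: "G n = D n"
  unfolding G_def det_G_mat det_tri_D by simp



fun Dv :: "nat \<Rightarrow> 'a::comm_ring_1 \<Rightarrow> 'a" where
  "Dv 0 x = 1"
| "Dv (Suc 0) x = (x-1)*(x-1) - x"
| "Dv (Suc (Suc n)) x = (((x-1)*(x-1)) + ((x-1)*(x-1)) - x) * Dv (Suc n) x - ((x-1)*(x-1))^2 * Dv n x"

lemma poly_D: "poly (map_poly (of_int :: int \<Rightarrow> 'a::comm_ring_1) (D n)) x = Dv n x"
proof -
  have e1: "poly (map_poly (of_int :: int \<Rightarrow> 'a) [:-1,1:]) x = x - 1" by simp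
  have e2: "poly (map_poly (of_int :: int \<Rightarrow> 'a) [:0,1:]) x = x" by simp
  show ?thesis
  proof (induction n rule: D.induct)
    case 1 then show ?case by simp
  next
    case 2 then show ?case
      by (simp only: D.simps Dv.simps of_int_poly_hom.hom_mult of_int_poly_hom.hom_minus poly_mult poly_diff e1 e2)
  next
    case (3 n) then show ?case
      by (simp only: D.simps Dv.simps of_int_poly_hom.hom_mult of_int_poly_hom.hom_minus of_int_poly_hom.hom_add
        of_int_poly_hom.hom_power poly_mult poly_diff poly_add poly_power e1 e2)
  qed
qed

lemma Dv_of_real: "Dv n (of_real t) = (of_real (Dv n t) :: 'a::{real_algebra_1,comm_ring_1})"
  by (induction n rule: D.induct) simp_all

lemma Dv_trig:
  fixes t \<phi> :: real
  assumes h: "4 * (sin \<phi>)^2 * (t-1)^2 = t"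
  shows "Dv m t * cos \<phi> = ((t-1)^2)^m * cos ((2*m+1)*\<phi>)"
proof (induction m rule: D.induct)
  case 1 then show ?case by simp
next
  case 2
  have "cos (3*\<phi>) = 4 * cos \<phi> ^ 3 - 3 * cos \<phi>" by (rule cos_treble_cos)
  also have "\<dots> = cos \<phi> * (1 - 4 * (sin \<phi>)^2)"
  proof -
    have "cos \<phi> ^ 3 = cos \<phi> * (cos \<phi>)^2" by (simp add: power3_eq_cube power2_eq_square)
    also have "\<dots> = cos \<phi> * (1 - (sin \<phi>)^2)" by (simp add: cos_squared_eq)
    finally show ?thesis by (simp add: algebra_simps)
  qed
  finally have c3: "cos (3*\<phi>) = cos \<phi> * (1 - 4 * (sin \<phi>)^2)" .
  have "(t-1)*(t-1) - t = (t-1)^2 - 4*(sin \<phi>)^2*(t-1)^2" using h by (simp add: power2_eq_square)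
  hence "Dv (Suc 0) t * cos \<phi> = ((t-1)^2 - 4*(sin \<phi>)^2*(t-1)^2) * cos \<phi>" by simp
  also have "\<dots> = (t-1)^2 * (cos \<phi> * (1 - 4*(sin \<phi>)^2))" by (simp add: algebra_simps)
  also have "\<dots> = (t-1)^2 * cos (3*\<phi>)" using c3 by simp
  finally show ?case by (simp add: mult.commute)
next
  case (3 m)
  let ?u = "(t-1)^2"
  have c2: "1 - cos (2*\<phi>) = 2*(sin \<phi>)^2" by (simp add: cos_double_sin)
  have "2 * ?u * (1 - cos (2*\<phi>)) = 4 * (sin \<phi>)^2 * (t-1)^2" unfolding c2 by simp
  hence tu: "t = 2 * ?u * (1 - cos (2*\<phi>))" using h by simp
  have cc: "cos ((2*real m+5)*\<phi>) + cos ((2*real m+1)*\<phi>) = 2 * cos (2*\<phi>) * cos ((2*real m+3)*\<phi>)"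
  proof -
    have "cos ((2*real m+3)*\<phi> + 2*\<phi>) + cos ((2*real m+3)*\<phi> - 2*\<phi>) = 2 * cos (2*\<phi>) * cos ((2*real m+3)*\<phi>)"
      by (simp add: cos_add cos_diff)
    moreover have "(2*real m+3)*\<phi> + 2*\<phi> = (2*real m+5)*\<phi>" "(2*real m+3)*\<phi> - 2*\<phi> = (2*real m+1)*\<phi>"
      by (simp_all add: algebra_simps)
    ultimately show ?thesis by simp
  qed
  have "Dv (Suc (Suc m)) t * cos \<phi> = (2*?u - t) * (Dv (Suc m) t * cos \<phi>) - ?u^2 * (Dv m t * cos \<phi>)"
    by (simp add: algebra_simps power2_eq_square)
  also have "\<dots> = (2*?u - t) * (?u^(Suc m) * cos ((2*real m+3)*\<phi>)) - ?u^2 * (?u^m * cos ((2*real m+1)*\<phi>))"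
    using 3 by (simp add: algebra_simps)
  also have "\<dots> = ?u^(Suc (Suc m)) * (2 * cos (2*\<phi>) * cos ((2*real m+3)*\<phi>) - cos ((2*real m+1)*\<phi>))"
    by (subst tu) (simp add: algebra_simps power2_eq_square)
  also have "\<dots> = ?u^(Suc (Suc m)) * cos ((2*real m+5)*\<phi>)" using cc by simp
  finally show ?case by (simp add: algebra_simps)
qed

lemma D_deg_lc: "degree (D n) = 2*n \<and> lead_coeff (D n) = 1"
proof (induction n rule: D.induct)
  case 1 then show ?case by simp
next
  case 2
  have "D (Suc 0) = [:1,-3,1:]" by simp
  then show ?case by simp
next
  case (3 n)
  have q1: "[:-1,1:]*[:-1,1:] + [:-1,1:]*[:-1,1:] - [:0,1:] = ([:2,-5,2:] :: int poly)" by simp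
  have q2: "([:-1,1:]*[:-1,1:])^2 = ([:1,-4,6,-4,1:] :: int poly)" by (simp add: power2_eq_square)
  let ?A = "[:2,-5,2:] * D (Suc n)" and ?B = "[:1,-4,6,-4,1:] * D n"
  have DS: "D (Suc n) \<noteq> 0" "D n \<noteq> 0" using 3 by (auto)
  have "degree ?A = degree ([:2,-5,2:]::int poly) + degree (D (Suc n))" by (rule degree_mult_eq) (use DS in auto)
  also have "\<dots> = 2*n + 4" using 3 by simp
  finally have dA: "degree ?A = 2*n + 4" .
  have "lead_coeff ?A = lead_coeff ([:2,-5,2:]::int poly) * lead_coeff (D (Suc n))" by (rule lead_coeff_mult)
  also have "\<dots> = 2"
  proof -
    have l1: "lead_coeff (D (Suc n)) = 1" using 3 by blast
    have l2: "lead_coeff ([:2,-5,2:]::int poly) = 2" by simp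
    show ?thesis unfolding l1 l2 by simp
  qed
  finally have lA: "lead_coeff ?A = 2" .
  have "degree ?B = degree ([:1,-4,6,-4,1:]::int poly) + degree (D n)" by (rule degree_mult_eq) (use DS in auto)
  also have "\<dots> = 2*n + 4" using 3 by simp
  finally have dB: "degree ?B = 2*n + 4" .
  have "lead_coeff ?B = lead_coeff ([:1,-4,6,-4,1:]::int poly) * lead_coeff (D n)" by (rule lead_coeff_mult)
  also have "\<dots> = 1"
  proof -
    have l1: "lead_coeff (D n) = 1" using 3 by blast
    have l2: "lead_coeff ([:1,-4,6,-4,1:]::int poly) = 1" by simp
    show ?thesis unfolding l1 l2 by simp
  qed
  finally have lB: "lead_coeff ?B = 1" .
  have eq: "D (Suc (Suc n)) = ?A - ?B" by (simp only: D.simps q1 q2)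
  have c: "coeff (?A - ?B) (2*n+4) = 1" proof -
    have "coeff ?A (2*n+4) = 2" using dA lA by (metis)
    moreover have "coeff ?B (2*n+4) = 1" using dB lB by (metis)
    ultimately show ?thesis unfolding coeff_diff by simp
  qed
  have "degree (?A - ?B) \<le> 2*n+4" using dA dB degree_diff_le[of ?A "2*n+4" ?B] by simp
  moreover have "degree (?A - ?B) \<ge> 2*n+4" using c by (intro le_degree) simp
  ultimately have d: "degree (?A - ?B) = 2*n+4" by simp
  show ?case
  proof
    show "degree (D (Suc (Suc n))) = 2 * Suc (Suc n)" by (subst eq, subst d, simp)
    show "lead_coeff (D (Suc (Suc n))) = 1" by (simp only: eq d c)
  qed
qed



definition phi :: "nat \<Rightarrow> nat \<Rightarrow> real" where "phi N k = (2*real k+1)*pi/(2*(2*real N+1))"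
definition lam :: "nat \<Rightarrow> nat \<Rightarrow> real" where "lam N k = 1/(4*(sin (phi N k))^2)"
definition rho :: "real \<Rightarrow> real" where "rho l = (2 + l + sqrt (l^2+4*l))/2"
definition Ar :: "nat \<Rightarrow> nat \<Rightarrow> real" where
  "Ar N i = (if i < N then 1/rho (lam N i) else rho (lam N (2*N-1-i)))"
definition Br :: "nat \<Rightarrow> nat \<Rightarrow> real" where
  "Br N i = (if i < N-1 then Ar (N-1) i else if i = N-1 then 1 else Ar (N-1) (i-1))"

lemma phi_pos: "0 < phi N k" unfolding phi_def by (intro divide_pos_pos mult_pos_pos) auto

lemma phi_lt: assumes "k < N" shows "phi N k < pi/2"
proof -
  have "2*real k+1 < 2*real N+1" using assms by simp
  hence "(2*real k+1)*pi < (2*real N+1)*pi" by simp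
  thus ?thesis unfolding phi_def by (simp add: field_simps)
qed

lemma phi_mono: assumes "(2*real k+1) * (2*real N'+1) < (2*real k'+1) * (2*real N+1)"
  shows "phi N k < phi N' k'"
proof -
  from assms have "(2*real k+1) * (2*real N'+1) * pi < (2*real k'+1) * (2*real N+1) * pi" by simp
  thus ?thesis unfolding phi_def by (simp add: field_simps)
qed

lemma sin_phi_pos: "k < N \<Longrightarrow> 0 < sin (phi N k)"
  using phi_pos[of N k] phi_lt[of k N] by (intro sin_gt_zero) auto

lemma lam_pos: "k < N \<Longrightarrow> 0 < lam N k"
  using sin_phi_pos[of k N] unfolding lam_def by simp

lemma lam_anti: assumes "k < N" "k' < N'" "phi N k < phi N' k'" shows "lam N' k' < lam N k"
proof -
  have "sin (phi N k) < sin (phi N' k')"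
    using assms phi_pos[of N k] phi_lt[of k' N'] by (intro sin_monotone_2pi) auto
  moreover have "0 < sin (phi N k)" using sin_phi_pos assms by auto
  ultimately have "(sin (phi N k))^2 < (sin (phi N' k'))^2"
    by (simp add: power_strict_mono)
  moreover have "0 < (sin (phi N k))^2" using \<open>0 < sin (phi N k)\<close> by simp
  moreover have "0 < sin (phi N' k')" using sin_phi_pos assms by auto
  ultimately show ?thesis unfolding lam_def
    by (intro divide_strict_left_mono) auto
qed

lemma rho_gt1: "0 < l \<Longrightarrow> 1 < rho l"
proof -
  assume "0 < l"
  moreover have "0 \<le> sqrt (l^2+4*l)" using \<open>0 < l\<close> by simp
  ultimately show ?thesis unfolding rho_def by (simp add: add_pos_nonneg)
qed

lemma rho_mono: assumes "0 \<le> l" "l < l'" shows "rho l < rho l'"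
proof -
  have "l^2 \<le> l'^2" using power_mono[of l l' 2] assms by simp
  hence "l^2+4*l \<le> l'^2+4*l'" using assms by linarith
  hence sq: "sqrt (l^2+4*l) \<le> sqrt (l'^2+4*l')" by (rule real_sqrt_le_mono)
  show ?thesis unfolding rho_def by (rule divide_strict_right_mono) (use sq assms in linarith, simp)
qed

lemma rho_root: assumes "0 \<le> l" shows "(rho l)^2 - (2+l) * rho l + 1 = 0"
proof -
  define s where "s = sqrt (l^2+4*l)"
  have s2: "s^2 = l^2+4*l" unfolding s_def using assms by simp
  have "(rho l)^2 - (2+l) * rho l + 1 = (s^2 - (l^2+4*l))/4"
    unfolding rho_def s_def[symmetric] by (simp add: field_simps power2_eq_square)
  thus ?thesis using s2 by simp
qed

lemma inv_root: fixes t l :: real assumes "t \<noteq> 0" "t^2 - (2+l)*t + 1 = 0" shows "(1/t)^2 - (2+l)*(1/t) + 1 = 0"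
proof -
  have "(1/t)^2 - (2+l)*(1/t) + 1 = (t^2 - (2+l)*t + 1) / t^2"
    using assms(1) by (simp add: field_simps power2_eq_square)
  thus ?thesis using assms(2) by simp
qed

lemma root_trig: assumes "k < N" "t^2 - (2 + lam N k)*t + 1 = 0"
  shows "4 * (sin (phi N k))^2 * (t-1)^2 = t"
proof -
  have s: "0 < (sin (phi N k))^2" using sin_phi_pos[OF assms(1)] by simp
  have "(t-1)^2 = lam N k * t" using assms(2) by (simp add: algebra_simps power2_eq_square)
  thus ?thesis using s unfolding lam_def by (simp add: field_simps)
qed

lemma cos_odd: "cos ((2*real N+1) * phi N k) = 0"
proof -
  have "(2*real N+1) * phi N k = real_of_int (int (2*k+1)) * (pi/2)"
    unfolding phi_def by (simp add: field_simps)
  thus ?thesis by (subst cos_zero_iff_int) (auto intro!: exI[of _ "int (2*k+1)"])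
qed

lemma Dv_root: assumes "k < N" "t^2 - (2 + lam N k)*t + 1 = 0" shows "Dv N t = 0"
proof -
  have "Dv N t * cos (phi N k) = ((t-1)^2)^N * cos ((2*real N+1) * phi N k)"
    by (rule Dv_trig[OF root_trig[OF assms]])
  hence "Dv N t * cos (phi N k) = 0" by (simp add: cos_odd)
  moreover have "cos (phi N k) > 0" using phi_pos[of N k] phi_lt[OF assms(1)] by (intro cos_gt_zero) auto
  ultimately show ?thesis by simp
qed

lemma Ar_root: assumes "i < 2*N" shows "Dv N (Ar N i) = 0"
proof (cases "i < N")
  case True
  have l: "0 < lam N i" using lam_pos True by auto
  have "rho (lam N i) \<noteq> 0" using rho_gt1[OF l] by simp
  hence "(1/rho (lam N i))^2 - (2 + lam N i)*(1/rho (lam N i)) + 1 = 0"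
    using rho_root[of "lam N i"] l by (intro inv_root) auto
  thus ?thesis using True unfolding Ar_def by (simp add: Dv_root[OF True])
next
  case False
  hence k: "2*N-1-i < N" using assms by auto
  have l: "0 < lam N (2*N-1-i)" using lam_pos k by auto
  show ?thesis using False unfolding Ar_def using Dv_root[OF k] rho_root[of "lam N (2*N-1-i)"] l by simp
qed

lemma Ar_pos: assumes "i < 2*N" shows "0 < Ar N i"
proof (cases "i < N")
  case True
  then show ?thesis using rho_gt1[OF lam_pos[OF True]] unfolding Ar_def by simp
next
  case False
  hence k: "2*N-1-i < N" using assms by auto
  show ?thesis using False rho_gt1[OF lam_pos[OF k]] unfolding Ar_def by simp
qed

lemma lam_le_mono: assumes "k < k'" "k' < N" shows "lam N k' < lam N k"
proof (rule lam_anti)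
  show "k < N" "k' < N" using assms by auto
  have "2*real k+1 < 2*real k'+1" using assms by simp
  hence "(2*real k+1) * (2*real N+1) < (2*real k'+1) * (2*real N+1)"
    by (intro mult_strict_right_mono) auto
  thus "phi N k < phi N k'" by (rule phi_mono)
qed

lemma Ar_mono: assumes "i < j" "j < 2*N" shows "Ar N i < Ar N j"
proof -
  consider "j < N" | "i < N" "N \<le> j" | "N \<le> i" by linarith
  then show ?thesis
  proof cases
    case 1
    have "lam N j < lam N i" using 1 assms by (intro lam_le_mono) auto
    hence "rho (lam N j) < rho (lam N i)" using lam_pos[of j N] 1 by (intro rho_mono) auto
    moreover have "0 < rho (lam N j)" using rho_gt1[OF lam_pos[of j N]] 1 by simp
    ultimately show ?thesis using 1 assms unfolding Ar_def by (simp add: divide_strict_left_mono)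
  next
    case 2
    have "1/rho (lam N i) < 1" using rho_gt1[OF lam_pos[of i N]] 2 by simp
    moreover have "1 < rho (lam N (2*N-1-j))" using rho_gt1[OF lam_pos[of "2*N-1-j" N]] 2 assms by simp
    ultimately show ?thesis using 2 unfolding Ar_def by simp
  next
    case 3
    have "lam N (2*N-1-i) < lam N (2*N-1-j)" using 3 assms by (intro lam_le_mono) auto
    moreover have "2*N-1-i < N" using 3 assms by auto
    ultimately have "rho (lam N (2*N-1-i)) < rho (lam N (2*N-1-j))" using lam_pos[of "2*N-1-i" N]
      by (intro rho_mono) auto
    thus ?thesis using 3 assms unfolding Ar_def by simp
  qed
qed



lemma lam_cross: assumes "Suc j < N" shows "lam N (Suc j) < lam (N-1) j" "lam (N-1) j < lam N j"
proof -
  have N1: "real (N-1) = real N - 1" "real (N - Suc 0) = real N - 1" using assms by auto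
  show "lam N (Suc j) < lam (N-1) j"
  proof (rule lam_anti)
    show "j < N - 1" "Suc j < N" using assms by auto
    have "(2*real j+1)*(2*real N+1) < (2*real (Suc j)+1)*(2*(real N - 1)+1)"
      using assms by (simp add: algebra_simps)
    thus "phi (N-1) j < phi N (Suc j)" by (intro phi_mono) (simp add: N1)
  qed
  show "lam (N-1) j < lam N j"
  proof (rule lam_anti)
    show "j < N" "j < N - 1" using assms by auto
    have "(2*real j+1)*(2*(real N - 1)+1) < (2*real j+1)*(2*real N+1)"
      by (intro mult_strict_left_mono) auto
    thus "phi N j < phi (N-1) j" by (intro phi_mono) (simp add: N1)
  qed
qed

lemma inv_rho_less: assumes "0 < a" "a < b" shows "1/rho b < 1/rho a"
proof -
  have "rho a < rho b" using assms by (intro rho_mono) auto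
  moreover have "0 < rho a" using rho_gt1[OF assms(1)] by simp
  ultimately show ?thesis by (simp add: divide_strict_left_mono)
qed

lemma interlace_strict: assumes "1 \<le> N" "i < 2*N-1"
  shows "Ar N i < Br N i \<and> Br N i < Ar N (Suc i)"
proof -
  consider "i < N-1" | "i = N-1" | "N \<le> i" by linarith
  then show ?thesis
  proof cases
    case 1
    hence j: "Suc i < N" by auto
    have l0: "0 < lam N (Suc i)" "0 < lam (N-1) i" using lam_pos j by auto
    have "Ar N i = 1/rho (lam N i)" "Br N i = 1/rho (lam (N-1) i)" "Ar N (Suc i) = 1/rho (lam N (Suc i))"
      using 1 j unfolding Ar_def Br_def by auto
    thus ?thesis using inv_rho_less[OF l0(2) lam_cross(2)[OF j]] inv_rho_less[OF l0(1) lam_cross(1)[OF j]]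
      by simp
  next
    case 2
    have l0: "0 < lam N (N-1)" using lam_pos assms by auto
    have "2*N-1-N = N-1" by auto
    hence "Ar N i = 1/rho (lam N (N-1))" "Br N i = 1" "Ar N (Suc i) = rho (lam N (N-1))"
      using 2 assms unfolding Ar_def Br_def by auto
    thus ?thesis using rho_gt1[OF l0] by simp
  next
    case 3
    define j where "j = 2*N-2-i"
    have j: "Suc j < N" using 3 assms unfolding j_def by auto
    have l0: "0 < lam N (Suc j)" "0 < lam (N-1) j" using lam_pos j by auto
    have e1: "2*N-1-i = Suc j" "2*N-1-Suc i = j" "2*(N-1)-1-(i-1) = j" using 3 assms unfolding j_def by auto
    have "Ar N i = rho (lam N (Suc j))" "Br N i = rho (lam (N-1) j)" "Ar N (Suc i) = rho (lam N j)"
      using 3 assms e1 unfolding Ar_def Br_def by auto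
    thus ?thesis using rho_mono[of "lam N (Suc j)" "lam (N-1) j"] rho_mono[of "lam (N-1) j" "lam N j"]
      lam_cross[OF j] l0 by simp
  qed
qed

lemma rho_ge: assumes "0 \<le> l" "1 \<le> T" "(T-1)^2 \<le> T*l" shows "T \<le> rho l"
proof (cases "2*T-2-l \<le> 0")
  case True
  have sq: "0 \<le> sqrt (l^2+4*l)" using assms by simp
  have "2*T \<le> 2 + l + sqrt (l^2+4*l)" using True sq by linarith
  thus ?thesis unfolding rho_def by simp
next
  case False
  have "(2*T-2-l)^2 = l^2 + 4*((T-1)^2 - T*l) + 4*l" by (simp add: algebra_simps power2_eq_square)
  also have "\<dots> \<le> l^2 + 4*l" using assms by simp
  finally have "2*T-2-l \<le> sqrt (l^2+4*l)" by (rule real_le_rsqrt)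
  hence "2*T \<le> 2 + l + sqrt (l^2+4*l)" by linarith
  thus ?thesis unfolding rho_def by simp
qed

lemma largest_root: assumes "1 \<le> N" shows "real N + 1 \<le> rho (lam N 0)"
proof -
  let ?p = "phi N 0"
  have p: "?p = pi/(2*(2*real N+1))" unfolding phi_def by simp
  have sp: "0 < sin ?p" using sin_phi_pos assms by auto
  have sle: "sin ?p \<le> ?p" using phi_pos[of N 0] by (intro sin_x_le_x) auto
  have "(sin ?p)^2 \<le> ?p^2" using sp sle by (intro power_mono) auto
  also have "?p^2 = pi^2/(4*(2*real N+1)^2)" unfolding p by (simp add: power2_eq_square field_simps)
  also have "\<dots> \<le> 16/(4*(2*real N+1)^2)"
  proof -
    have "pi^2 \<le> 4^2" using pi_less_4 by (intro power_mono) auto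
    thus ?thesis by (intro divide_right_mono) auto
  qed
  finally have s2: "(sin ?p)^2 \<le> 4/(2*real N+1)^2" by simp
  have l: "lam N 0 \<ge> (2*real N+1)^2/16"
  proof -
    have "4*(sin ?p)^2 \<le> 16/(2*real N+1)^2" using s2 by simp
    hence "1/(16/(2*real N+1)^2) \<le> 1/(4*(sin ?p)^2)" using sp by (intro divide_left_mono) auto
    thus ?thesis unfolding lam_def by simp
  qed
  have poly: "16*(real N)^2 \<le> (2*real N+1)^2*(real N+1)"
  proof -
    have "(2*real N+1)^2*(real N+1) - 16*(real N)^2 = real N * (4*(real N - 1)^2 + 1) + 1"
      by (simp add: algebra_simps power2_eq_square)
    moreover have "0 \<le> real N * (4*(real N - 1)^2 + 1)" by simp
    ultimately show ?thesis by linarith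
  qed
  show ?thesis
  proof (rule rho_ge)
    show "0 \<le> lam N 0" using lam_pos assms by (simp add: less_imp_le)
    show "1 \<le> real N + 1" by simp
    have "(real N + 1) * ((2*real N+1)^2/16) \<le> (real N + 1) * lam N 0"
      using l by (intro mult_left_mono) auto
    moreover have "(real N + 1 - 1)^2 \<le> (real N + 1) * ((2*real N+1)^2/16)"
      using poly by (simp add: field_simps)
    ultimately show "(real N + 1 - 1)^2 \<le> (real N + 1) * lam N 0" by linarith
  qed
qed



lemma monic_roots_set:
  fixes p :: "'a::idom poly"
  assumes "finite S" "degree p = card S" "lead_coeff p = 1" "\<forall>x\<in>S. poly p x = 0"
  shows "p = (\<Prod>x\<in>S. [:-x,1:])"
  using assms
proof (induction S arbitrary: p rule: finite_induct)
  case empty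
  then show ?case using monic_degree_0[of p] by simp
next
  case (insert a S p)
  have "poly p a = 0" using insert by simp
  then obtain q where q: "p = [:-a,1:] * q" by (auto simp: poly_eq_0_iff_dvd elim: dvdE)
  have p0: "p \<noteq> 0" using insert(5) by auto
  hence q0: "q \<noteq> 0" using q by auto
  have "degree ([:-a,1:]*q) = degree [:-a,1:] + degree q" by (rule degree_mult_eq) (use q0 in auto)
  hence "degree p = 1 + degree q" using q by simp
  hence dq: "degree q = card S" using insert by simp
  have "lead_coeff ([:-a,1:]*q) = lead_coeff [:-a,1:] * lead_coeff q" by (rule lead_coeff_mult)
  hence "lead_coeff p = lead_coeff q" using q by simp
  hence lq: "lead_coeff q = 1" using insert by simp
  have rq: "\<forall>x\<in>S. poly q x = 0"
  proof
    fix x assume x: "x \<in> S"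
    hence "x \<noteq> a" using insert by auto
    moreover have "poly p x = 0" using insert x by auto
    ultimately show "poly q x = 0" using q by simp
  qed
  have "q = (\<Prod>x\<in>S. [:-x,1:])" using insert.IH[OF dq lq rq] .
  thus ?case using q insert by simp
qed

lemma monic_roots_idx:
  fixes p :: "'a::idom poly"
  assumes "inj_on f {..<d}" "degree p = d" "lead_coeff p = 1" "\<forall>i<d. poly p (f i) = 0"
  shows "p = (\<Prod>i<d. [:-f i,1:])"
proof -
  have "p = (\<Prod>x\<in>f`{..<d}. [:-x,1:])"
    using assms by (intro monic_roots_set) (auto simp: card_image)
  also have "\<dots> = (\<Prod>i<d. [:-f i,1:])" using assms(1) by (simp add: prod.reindex)
  finally show ?thesis .
qed

lemma prod_idx_list: "(\<Prod>i<d. g (f i)) = (\<Prod>a\<leftarrow>map f [0..<d]. g a)"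
proof -
  have "(\<Prod>i<d. g (f i)) = (\<Prod>i\<in>set [0..<d]. g (f i))" by (simp add: lessThan_atLeast0)
  also have "\<dots> = prod_list (map (\<lambda>i. g (f i)) [0..<d])" by (rule prod.distinct_set_conv_list) simp
  finally show ?thesis by (simp add: comp_def)
qed

lemma order_linear: "order a [:-b,1:] = (if a = b then 1 else (0::nat))"
proof (cases "a = b")
  case True then show ?thesis using order_power_n_n[of a 1] by simp
next
  case False
  have "order a [:-b,1:] = 0" by (rule order_0I) (use False in simp)
  thus ?thesis using False by simp
qed

lemma order_prod_set:
  fixes a :: "'a::idom"
  assumes "finite S" shows "order a (\<Prod>x\<in>S. [:-x,1:]) = (if a \<in> S then 1 else 0)"
  using assms
proof (induction S rule: finite_induct)
  case empty then show ?case by simp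
next
  case (insert b S)
  have ne: "(\<Prod>x\<in>S. [:-x,1:]) \<noteq> (0 :: 'a poly)" using insert by (simp add: prod_zero_iff)
  have "order a (\<Prod>x\<in>insert b S. [:-x,1:]) = order a ([:-b,1:] * (\<Prod>x\<in>S. [:-x,1:]))"
    using insert by simp
  also have "\<dots> = order a [:-b,1:] + order a (\<Prod>x\<in>S. [:-x,1:])"
  proof (rule order_mult)
    have l0: "[:-b,1:] \<noteq> (0::'a poly)" by simp
    show "[:-b,1:] * (\<Prod>x\<in>S. [:-x,1:]) \<noteq> 0" using ne l0 no_zero_divisors by blast
  qed
  finally show ?case using insert by (auto simp: order_linear)
qed

lemma order_prod_idx:
  fixes f :: "nat \<Rightarrow> 'a::idom"
  assumes "inj_on f {..<d}"
  shows "order a (\<Prod>i<d. [:-f i,1:]) = (if a \<in> f`{..<d} then 1 else 0)"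
proof -
  have "(\<Prod>i<d. [:-f i,1:]) = (\<Prod>x\<in>f`{..<d}. [:-x,1:])" using assms by (simp add: prod.reindex)
  thus ?thesis by (simp add: order_prod_set)
qed

lemma Ar_inj: "inj_on (Ar N) {..<2*N}"
proof (rule inj_onI)
  fix i j assume "i \<in> {..<2*N}" "j \<in> {..<2*N}" "Ar N i = Ar N j"
  thus "i = j" using Ar_mono[of i j N] Ar_mono[of j i N] by (cases i j rule: linorder_cases) auto
qed

lemma G_real: "map_poly (of_int :: int \<Rightarrow> real) (G N) = (\<Prod>i<2*N. [:-Ar N i,1:])"
proof (rule monic_roots_idx[OF Ar_inj])
  show "degree (map_poly (of_int :: int \<Rightarrow> real) (G N)) = 2*N"
  proof -
    have "degree (map_poly (of_int :: int \<Rightarrow> real) (D N)) = degree (D N)" by (rule degree_map_poly) simp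
    thus ?thesis using D_deg_lc[of N] by (simp add: G_eq_D)
  qed
  show "lead_coeff (map_poly (of_int :: int \<Rightarrow> real) (G N)) = 1"
  proof -
    have d: "degree (map_poly (of_int :: int \<Rightarrow> real) (D N)) = degree (D N)" by (rule degree_map_poly) simp
    have "lead_coeff (map_poly (of_int :: int \<Rightarrow> real) (D N)) = of_int (lead_coeff (D N))"
      unfolding d by (rule coeff_map_poly) simp
    moreover have l: "lead_coeff (D N) = 1" using D_deg_lc[of N] by blast
    ultimately show ?thesis unfolding G_eq_D by simp
  qed
  show "\<forall>i<2*N. poly (map_poly (of_int :: int \<Rightarrow> real) (G N)) (Ar N i) = 0"
    by (simp add: G_eq_D poly_D Ar_root)
qed

lemma G_complex: "map_poly (of_int :: int \<Rightarrow> complex) (G N) = (\<Prod>i<2*N. [:-of_real (Ar N i),1:])"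
proof (rule monic_roots_idx)
  show "inj_on (\<lambda>i. complex_of_real (Ar N i)) {..<2*N}"
    using Ar_inj[of N] by (auto simp: inj_on_def)
  show "degree (map_poly (of_int :: int \<Rightarrow> complex) (G N)) = 2*N"
  proof -
    have "degree (map_poly (of_int :: int \<Rightarrow> complex) (D N)) = degree (D N)" by (rule degree_map_poly) simp
    thus ?thesis using D_deg_lc[of N] by (simp add: G_eq_D)
  qed
  show "lead_coeff (map_poly (of_int :: int \<Rightarrow> complex) (G N)) = 1"
  proof -
    have d: "degree (map_poly (of_int :: int \<Rightarrow> complex) (D N)) = degree (D N)" by (rule degree_map_poly) simp
    have "lead_coeff (map_poly (of_int :: int \<Rightarrow> complex) (D N)) = of_int (lead_coeff (D N))"
      unfolding d by (rule coeff_map_poly) simp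
    moreover have l: "lead_coeff (D N) = 1" using D_deg_lc[of N] by blast
    ultimately show ?thesis unfolding G_eq_D by simp
  qed
  show "\<forall>i<2*N. poly (map_poly (of_int :: int \<Rightarrow> complex) (G N)) (of_real (Ar N i)) = 0"
    by (simp add: G_eq_D poly_D Ar_root Dv_of_real)
qed



lemma G_real_deg: "degree (map_poly (of_int :: int \<Rightarrow> real) (G N)) = 2*N"
proof -
  have "degree (map_poly (of_int :: int \<Rightarrow> real) (D N)) = degree (D N)" by (rule degree_map_poly) simp
  thus ?thesis using D_deg_lc[of N] by (simp add: G_eq_D)
qed

lemma G_real_lc: "lead_coeff (map_poly (of_int :: int \<Rightarrow> real) (G N)) = 1"
proof -
  have d: "degree (map_poly (of_int :: int \<Rightarrow> real) (D N)) = degree (D N)" by (rule degree_map_poly) simp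
  have "lead_coeff (map_poly (of_int :: int \<Rightarrow> real) (D N)) = of_int (lead_coeff (D N))"
    unfolding d by (rule coeff_map_poly) simp
  moreover have l: "lead_coeff (D N) = 1" using D_deg_lc[of N] by blast
  ultimately show ?thesis unfolding G_eq_D by simp
qed

lemma Ar_le: "i \<le> j \<Longrightarrow> j < 2*N \<Longrightarrow> Ar N i \<le> Ar N j"
  using Ar_mono[of i j N] by (cases "i = j") auto

lemma Br_mono: assumes "1 \<le> N" "i < j" "j < 2*N-1" shows "Br N i < Br N j"
proof -
  have "Br N i < Ar N (Suc i)" using interlace_strict[of N i] assms by auto
  also have "\<dots> \<le> Ar N j" using assms by (intro Ar_le) auto
  also have "\<dots> < Br N j" using interlace_strict[of N j] assms by auto
  finally show ?thesis .
qed

lemma Ar_Br_ne: assumes "1 \<le> N" "i < 2*N" "j < 2*N-1" shows "Ar N i \<noteq> Br N j"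
proof (cases "i \<le> j")
  case True
  have "Ar N i \<le> Ar N j" using True assms by (intro Ar_le) auto
  also have "\<dots> < Br N j" using interlace_strict[of N j] assms by auto
  finally show ?thesis by simp
next
  case False
  have "Br N j < Ar N (Suc j)" using interlace_strict[of N j] assms by auto
  also have "\<dots> \<le> Ar N i" using False assms by (intro Ar_le) auto
  finally show ?thesis by simp
qed

lemma ArM_Br: assumes "1 \<le> N" "j < 2*(N-1)"
  shows "Ar (N-1) j = Br N (if j < N-1 then j else Suc j)" "(if j < N-1 then j else Suc j) < 2*N-1"
    "(if j < N-1 then j else Suc j) \<noteq> N-1"
  using assms unfolding Br_def by auto

lemma Ar_ArM_ne: assumes "1 \<le> N" "i < 2*N" "j < 2*(N-1)" shows "Ar N i \<noteq> Ar (N-1) j"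
  using Ar_Br_ne[OF assms(1,2) ArM_Br(2)[OF assms(1,3)]] ArM_Br(1)[OF assms(1,3)] by simp

lemma q_real: assumes "1 \<le> N"
  shows "map_poly (of_int :: int \<Rightarrow> real) ([:-1,1:] * G (N-1)) = (\<Prod>j<2*N-1. [:-Br N j,1:])"
proof (rule monic_roots_idx)
  let ?g = "map_poly (of_int :: int \<Rightarrow> real) (G (N-1))"
  have e: "map_poly (of_int :: int \<Rightarrow> real) ([:-1,1:] * G (N-1)) = [:-1,1:] * ?g"
    by (subst of_int_poly_hom.hom_mult) simp
  have g0: "?g \<noteq> 0" using G_real_lc[of "N-1"] by auto
  show "inj_on (Br N) {..<2*N-1}"
  proof (rule inj_onI)
    fix i j assume "i \<in> {..<2*N-1}" "j \<in> {..<2*N-1}" "Br N i = Br N j"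
    thus "i = j" using Br_mono[OF assms, of i j] Br_mono[OF assms, of j i] by (cases i j rule: linorder_cases) auto
  qed
  have "degree ([:-1,1:] * ?g) = degree [:-1::real,1:] + degree ?g" by (rule degree_mult_eq) (use g0 in auto)
  thus "degree (map_poly (of_int :: int \<Rightarrow> real) ([:-1,1:] * G (N-1))) = 2*N-1"
    unfolding e using G_real_deg[of "N-1"] assms by simp
  have "lead_coeff ([:-1,1:] * ?g) = lead_coeff [:-1::real,1:] * lead_coeff ?g" by (rule lead_coeff_mult)
  thus "lead_coeff (map_poly (of_int :: int \<Rightarrow> real) ([:-1,1:] * G (N-1))) = 1"
    unfolding e using G_real_lc[of "N-1"] by simp
  show "\<forall>j<2*N-1. poly (map_poly (of_int :: int \<Rightarrow> real) ([:-1,1:] * G (N-1))) (Br N j) = 0"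
  proof (intro allI impI)
    fix j assume j: "j < 2*N-1"
    show "poly (map_poly (of_int :: int \<Rightarrow> real) ([:-1,1:] * G (N-1))) (Br N j) = 0"
    proof (cases "j = N-1")
      case True
      then show ?thesis unfolding e by (simp add: Br_def)
    next
      case False
      define j' where "j' = (if j < N-1 then j else j - 1)"
      have j': "j' < 2*(N-1)" "Br N j = Ar (N-1) j'" using False j assms unfolding j'_def Br_def by auto
      have "poly ?g (Br N j) = 0" unfolding j'(2) G_eq_D poly_D using Ar_root[OF j'(1)] .
      thus ?thesis unfolding e by simp
    qed
  qed
qed



lemma sorted_strict_map: assumes "\<And>i j. i < j \<Longrightarrow> j < d \<Longrightarrow> f i < (f j :: real)"
  shows "sorted (map f [0..<d])"
  unfolding sorted_iff_nth_mono using assms by (auto simp: le_less)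

theorem theorem10p1:
  fixes n :: nat
  assumes "n \<ge> 1"
  shows "(\<forall>z::complex. poly (map_poly of_int (G n)) z = 0 \<longrightarrow> z \<in> \<real>)
       \<and> rsquarefree (map_poly (of_int :: int \<Rightarrow> complex) (G n * G (n - 1)))
       \<and> interlaced (map_poly of_int (G n)) (map_poly of_int ([:-1, 1:] * G (n - 1)))
       \<and> (\<exists>x::real. poly (map_poly of_int (G n)) x = 0 \<and> x \<ge> real n + 1)"
proof (intro conjI)
  show "\<forall>z::complex. poly (map_poly of_int (G n)) z = 0 \<longrightarrow> z \<in> \<real>"
  proof (intro allI impI)
    fix z :: complex assume "poly (map_poly of_int (G n)) z = 0"
    hence "(\<Prod>i<2*n. poly [:-of_real (Ar n i),1:] z) = 0" unfolding G_complex poly_prod .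
    then obtain i where "z - of_real (Ar n i) = 0" by (auto simp: prod_zero_iff)
    hence "z = of_real (Ar n i)" by simp
    thus "z \<in> \<real>" by simp
  qed
next
  let ?P = "\<Prod>i<2*n. [:-complex_of_real (Ar n i),1:]"
  let ?Q = "\<Prod>i<2*(n-1). [:-complex_of_real (Ar (n-1) i),1:]"
  have e: "map_poly (of_int :: int \<Rightarrow> complex) (G n * G (n - 1)) = ?P * ?Q"
    by (simp only: of_int_poly_hom.hom_mult G_complex)
  have injP: "inj_on (\<lambda>i. complex_of_real (Ar n i)) {..<2*n}"
    using Ar_inj[of n] by (auto simp: inj_on_def)
  have injQ: "inj_on (\<lambda>i. complex_of_real (Ar (n-1) i)) {..<2*(n-1)}"
    using Ar_inj[of "n-1"] by (auto simp: inj_on_def)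
  have P0: "?P \<noteq> 0" by (simp add: prod_zero_iff)
  have Q0: "?Q \<noteq> 0" by (simp add: prod_zero_iff)
  have PQ0: "?P * ?Q \<noteq> 0" using P0 Q0 no_zero_divisors by blast
  show "rsquarefree (map_poly (of_int :: int \<Rightarrow> complex) (G n * G (n - 1)))"
    unfolding e rsquarefree_def
  proof (intro conjI allI PQ0)
    fix a :: complex
    have o: "order a (?P * ?Q) = order a ?P + order a ?Q" by (rule order_mult[OF PQ0])
    have disj: "\<not> (a \<in> (\<lambda>i. complex_of_real (Ar n i)) ` {..<2*n} \<and> a \<in> (\<lambda>i. complex_of_real (Ar (n-1) i)) ` {..<2*(n-1)})"
      using Ar_ArM_ne[OF assms] by auto
    show "order a (?P * ?Q) = 0 \<or> order a (?P * ?Q) = 1"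
      unfolding o order_prod_idx[OF injP] order_prod_idx[OF injQ] using disj by auto
  qed
next
  show "interlaced (map_poly of_int (G n)) (map_poly of_int ([:-1, 1:] * G (n - 1)))"
    unfolding interlaced_def
  proof (intro conjI exI)
    show p0: "map_poly of_int (G n) \<noteq> (0::real poly)" using G_real_lc[of n] by auto
    have lq: "lead_coeff (map_poly (of_int :: int \<Rightarrow> real) ([:-1, 1:] * G (n - 1))) = 1"
      unfolding q_real[OF assms] by (simp add: lead_coeff_prod)
    show "map_poly of_int ([:-1, 1:] * G (n - 1)) \<noteq> (0::real poly)" using lq by auto
    show "sorted (map (Ar n) [0..<2*n])" by (rule sorted_strict_map) (rule Ar_mono)
    show "sorted (map (Br n) [0..<2*n-1])" by (rule sorted_strict_map) (rule Br_mono[OF assms])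
    show "map_poly of_int (G n) = smult (lead_coeff (map_poly of_int (G n))) (\<Prod>a\<leftarrow>map (Ar n) [0..<2*n]. [:-a, 1:])"
      using prod_idx_list[of "\<lambda>a. [:-a,1:]" "Ar n" "2*n"] by (subst G_real_lc) (simp only: G_real smult_1_left)
    show "map_poly of_int ([:-1, 1:] * G (n - 1)) = smult (lead_coeff (map_poly of_int ([:-1, 1:] * G (n - 1)))) (\<Prod>a\<leftarrow>map (Br n) [0..<2*n-1]. [:-a, 1:])"
      unfolding lq unfolding q_real[OF assms] prod_idx_list[symmetric] by simp
    show "interlace_lists (map (Ar n) [0..<2*n]) (map (Br n) [0..<2*n-1]) \<or> interlace_lists (map (Br n) [0..<2*n-1]) (map (Ar n) [0..<2*n])"
    proof (rule disjI1)
      show "interlace_lists (map (Ar n) [0..<2*n]) (map (Br n) [0..<2*n-1])"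
        unfolding interlace_lists_def
      proof (rule disjI2, intro conjI allI impI)
        show "length (map (Ar n) [0..<2*n]) = Suc (length (map (Br n) [0..<2*n-1]))" using assms by simp
        fix i assume i: "i < length (map (Br n) [0..<2*n-1])"
        hence i': "i < 2*n-1" by simp
        show "map (Ar n) [0..<2*n] ! i \<le> map (Br n) [0..<2*n-1] ! i"
          using interlace_strict[OF assms i'] i' by simp
        show "map (Br n) [0..<2*n-1] ! i \<le> map (Ar n) [0..<2*n] ! Suc i"
          using interlace_strict[OF assms i'] i' by simp
      qed
    qed
  qed
next
  have i: "2*n-1 < 2*n" using assms by simp
  have nl: "\<not> (2*n-1 < n)" "2*n-1-(2*n-1) = 0" using assms by auto
  have "Ar n (2*n-1) = rho (lam n 0)" unfolding Ar_def using nl by simp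
  moreover have "poly (map_poly of_int (G n)) (Ar n (2*n-1)) = (0::real)"
    unfolding G_eq_D poly_D using Ar_root[OF i] .
  ultimately show "\<exists>x::real. poly (map_poly of_int (G n)) x = 0 \<and> x \<ge> real n + 1"
    using largest_root[OF assms] by auto
qed


end
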